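(* Let $m,n$ be positive integers. The set $\{B_{i,j}: i\in[m], j\in[n-1]\}\cup\{C_n\}$ is a basis for the set $\Gamma_{m,n}$ of $m\times n$ stochastic matrices, i.e., it consists of $m(n-1)+1$ linearly independent stochastic matrices whose linear span contains $\Gamma_{m,n}$.
   Context: A real $m\times n$ matrix is stochastic if its entries are nonnegative and each row sums to $1$; $\Gamma_{m,n}$ is the set of such matrices (an affine set of dimension $m(n-1)$). For $i\in[m]$, $j\in[n-1]$, $B_{i,j}$ is the $m\times n$ $(0,1)$-matrix whose $(i,j)$ entry is $1$, whose $(j+1)$-th column has all entries $1$ except the $(i,j+1)$ entry which is $0$, and all of whose other entries are $0$. $C_n$ is the $m\times n$ $(0,1)$-matrix whose $n$-th column is all $1$'s and other entries $0$. *)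

theory Defs
  imports "HOL-Analysis.Analysis" "HOL-Library.Function_Algebras"
begin

text \<open>An m x n real matrix is modelled as a function nat => nat => real whose entries
  are indexed 1-based by row r in {1..m} and column s in {1..n}, and which vanishes
  outside that index range. Addition is pointwise (Function_Algebras).\<close>

definition mscale :: "real \<Rightarrow> (nat \<Rightarrow> nat \<Rightarrow> real) \<Rightarrow> (nat \<Rightarrow> nat \<Rightarrow> real)" where
  "mscale c A = (\<lambda>r s. c * A r s)"

definition is_mat :: "nat \<Rightarrow> nat \<Rightarrow> (nat \<Rightarrow> nat \<Rightarrow> real) \<Rightarrow> bool" where
  "is_mat m n A \<longleftrightarrow> (\<forall>r s. r \<notin> {1..m} \<or> s \<notin> {1..n} \<longrightarrow> A r s = 0)"

definition Gamma :: "nat \<Rightarrow> nat \<Rightarrow> (nat \<Rightarrow> nat \<Rightarrow> real) set" where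
  "Gamma m n = {A. is_mat m n A \<and> (\<forall>r\<in>{1..m}. \<forall>s\<in>{1..n}. A r s \<ge> 0)
                 \<and> (\<forall>r\<in>{1..m}. (\<Sum>s=1..n. A r s) = 1)}"

definition Bmat :: "nat \<Rightarrow> nat \<Rightarrow> nat \<Rightarrow> nat \<Rightarrow> (nat \<Rightarrow> nat \<Rightarrow> real)" where
  "Bmat m n i j = (\<lambda>r s. if r \<in> {1..m} \<and> s \<in> {1..n} then
       (if r = i \<and> s = j then 1 else if s = j + 1 \<and> r \<noteq> i then 1 else 0) else 0)"

definition Cmat :: "nat \<Rightarrow> nat \<Rightarrow> (nat \<Rightarrow> nat \<Rightarrow> real)" where
  "Cmat m n = (\<lambda>r s. if r \<in> {1..m} \<and> s = n then 1 else 0)"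

end

theory Submission imports Defs begin

lemma M: "module mscale"
  by unfold_locales (auto simp: mscale_def fun_eq_iff algebra_simps)

lemma sum_app: "(sum g A) x = (\<Sum>a\<in>A. g a x)"
  by (induction A rule: infinite_finite_induct) auto

fun coef :: "(nat \<Rightarrow> nat \<Rightarrow> real) \<Rightarrow> nat \<Rightarrow> nat \<Rightarrow> nat \<Rightarrow> real" where
  "coef A m i 0 = 0"
| "coef A m i (Suc j) = A i (Suc j) - (\<Sum>r\<in>{1..m}-{i}. coef A m r j)"

lemma Bent: "r \<in> {1..m} \<Longrightarrow> s \<in> {1..n} \<Longrightarrow>
  Bmat m n i j r s = (if i = r \<and> j = s then 1 else 0) + (if j + 1 = s \<and> i \<noteq> r then 1 else 0)"
  by (auto simp: Bmat_def)

lemma Bout: "r \<notin> {1..m} \<or> s \<notin> {1..n} \<Longrightarrow> Bmat m n i j r s = 0"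
  by (auto simp: Bmat_def)

lemma entry:
  assumes r: "r \<in> {1..m}" and s: "s \<in> {1..n}"
  shows "(\<Sum>p\<in>{1..m}\<times>{1..n-1}. mscale (a p) (Bmat m n (fst p) (snd p))) r s
     = (if s \<le> n - 1 then a (r, s) else 0) + (if 2 \<le> s then (\<Sum>i\<in>{1..m}-{r}. a (i, s - 1)) else 0)"
proof -
  have "(\<Sum>p\<in>{1..m}\<times>{1..n-1}. mscale (a p) (Bmat m n (fst p) (snd p))) r s
     = (\<Sum>p\<in>{1..m}\<times>{1..n-1}. a p * Bmat m n (fst p) (snd p) r s)"
    by (simp add: sum_app mscale_def)
  also have "\<dots> = (\<Sum>i\<in>{1..m}. \<Sum>j\<in>{1..n-1}. a (i,j) * Bmat m n i j r s)"
    by (simp add: sum.cartesian_product case_prod_beta)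
  also have "\<dots> = (\<Sum>i\<in>{1..m}. \<Sum>j\<in>{1..n-1}. (if i = r \<and> j = s then a (i,j) else 0))
       + (\<Sum>i\<in>{1..m}. \<Sum>j\<in>{1..n-1}. (if j = s - 1 \<and> 2 \<le> s \<and> i \<noteq> r then a (i,j) else 0))"
    unfolding sum.distrib[symmetric]
    by (intro sum.cong refl) (auto simp: Bent[OF r s])
  also have "(\<Sum>i\<in>{1..m}. \<Sum>j\<in>{1..n-1}. (if i = r \<and> j = s then a (i,j) else 0))
      = (if s \<le> n - 1 then a (r, s) else 0)"
  proof -
    have "(\<Sum>i\<in>{1..m}. \<Sum>j\<in>{1..n-1}. (if i = r \<and> j = s then a (i,j) else 0))
       = (\<Sum>i\<in>{1..m}. if i = r then (if s \<le> n - 1 then a (r, s) else 0) else 0)"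
      using s by (intro sum.cong refl) (auto simp: sum.delta)
    also have "\<dots> = (if s \<le> n - 1 then a (r, s) else 0)" using r by (simp add: sum.delta)
    finally show ?thesis .
  qed
  also have "(\<Sum>i\<in>{1..m}. \<Sum>j\<in>{1..n-1}. (if j = s - 1 \<and> 2 \<le> s \<and> i \<noteq> r then a (i,j) else 0))
      = (if 2 \<le> s then (\<Sum>i\<in>{1..m}-{r}. a (i, s - 1)) else 0)"
  proof -
    have "(\<Sum>i\<in>{1..m}. \<Sum>j\<in>{1..n-1}. (if j = s - 1 \<and> 2 \<le> s \<and> i \<noteq> r then a (i,j) else 0))
       = (\<Sum>i\<in>{1..m}. if 2 \<le> s \<and> i \<noteq> r then a (i, s - 1) else 0)"
      using s by (intro sum.cong refl) (auto simp: sum.delta)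
    also have "\<dots> = (if 2 \<le> s then (\<Sum>i\<in>{1..m}-{r}. a (i, s - 1)) else 0)"
      by (cases "2 \<le> s") (auto simp: sum.If_cases intro!: sum.cong)
    finally show ?thesis .
  qed
  finally show ?thesis .
qed


lemma B_Gamma:
  assumes "i \<in> {1..m}" "j \<in> {1..n-1}"
  shows "Bmat m n i j \<in> Gamma m n"
proof -
  have "(\<Sum>s=1..n. Bmat m n i j r s) = 1" if r: "r \<in> {1..m}" for r
  proof -
    have "(\<Sum>s=1..n. Bmat m n i j r s) = (\<Sum>s=1..n. (if s = j then (if i = r then 1 else 0) else 0))
       + (\<Sum>s=1..n. (if s = j + 1 then (if i \<noteq> r then 1 else 0) else 0))"
      unfolding sum.distrib[symmetric] using r by (intro sum.cong refl) (auto simp: Bent)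
    also have "\<dots> = 1" using assms by (auto simp: sum.delta')
    finally show ?thesis .
  qed
  then show ?thesis by (auto simp: Gamma_def is_mat_def Bmat_def)
qed

lemma C_Gamma: "n > 0 \<Longrightarrow> Cmat m n \<in> Gamma m n"
  by (auto simp: Gamma_def is_mat_def Cmat_def sum.delta')

lemma B_inj:
  assumes "i \<in> {1..m}" "j \<in> {1..n-1}" "i' \<in> {1..m}" "j' \<in> {1..n-1}"
    and eq: "Bmat m n i j = Bmat m n i' j'"
  shows "i = i' \<and> j = j'"
proof -
  have "Bmat m n i j i j = 1" using assms(1,2) by (auto simp: Bmat_def)
  then have 1: "Bmat m n i' j' i j = 1" using eq by simp
  have "Bmat m n i' j' i' j' = 1" using assms(3,4) by (auto simp: Bmat_def)
  then have 2: "Bmat m n i j i' j' = 1" using eq by simp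
  show ?thesis using 1 2 assms(1-4) by (auto simp: Bmat_def split: if_splits)
qed

theorem mainTheorem8:
  fixes m n :: nat
  assumes "m > 0" and "n > 0"
  defines "S \<equiv> {Bmat m n i j | i j. i \<in> {1..m} \<and> j \<in> {1..n-1}} \<union> {Cmat m n}"
  shows "S \<subseteq> Gamma m n \<and> card S = m * (n - 1) + 1
         \<and> \<not> module.dependent mscale S \<and> Gamma m n \<subseteq> module.span mscale S"
proof -
  define P where "P = {1..m} \<times> {1..n-1}"
  define f where "f = (\<lambda>p. Bmat m n (fst p) (snd p))"
  define C where "C = Cmat m n"
  have finP: "finite P" by (simp add: P_def)
  have S': "S = insert C (f ` P)" unfolding S_def P_def f_def C_def by (auto simp: image_iff) fastforce+
  have inj: "inj_on f P"
    unfolding inj_on_def P_def f_def using B_inj by (metis SigmaE prod.collapse fst_conv snd_conv)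
  have Cnot: "C \<notin> f ` P"
  proof
    assume "C \<in> f ` P"
    then obtain i j where ij: "i \<in> {1..m}" "j \<in> {1..n-1}" "C = Bmat m n i j"
      unfolding P_def f_def by auto
    then have "C i j = 1" by (auto simp: Bmat_def)
    moreover have "C i j = 0" using ij(2) assms by (auto simp: C_def Cmat_def)
    ultimately show False by simp
  qed
  have finS: "finite S" using finP S' by simp
  have sumS: "(\<Sum>v\<in>S. mscale (u v) v) = (\<Sum>p\<in>P. mscale (u (f p)) (f p)) + mscale (u C) C" for u
    using finP Cnot inj by (simp add: S' sum.reindex add.commute)
  have zeroB: "(\<Sum>p\<in>P. mscale (a p) (f p)) r s = 0" if "r \<notin> {1..m} \<or> s \<notin> {1..n}" for a r s
    using that by (simp add: sum_app mscale_def f_def Bout)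
  have ent: "(\<Sum>p\<in>P. mscale (a p) (f p)) r s
     = (if s \<le> n - 1 then a (r, s) else 0) + (if 2 \<le> s then (\<Sum>i\<in>{1..m}-{r}. a (i, s - 1)) else 0)"
    if "r \<in> {1..m}" "s \<in> {1..n}" for a r s
    using entry[OF that] by (simp add: P_def f_def)
  have sub: "S \<subseteq> Gamma m n"
    using B_Gamma C_Gamma assms unfolding S_def by auto
  have card: "card S = m * (n - 1) + 1"
    using finP Cnot inj by (simp add: S' card_image P_def)
  have indep: "\<not> module.dependent mscale S"
  proof
    assume "module.dependent mscale S"
    then obtain t u where t: "finite t" "t \<subseteq> S" "(\<Sum>v\<in>t. mscale (u v) v) = 0" "\<exists>v\<in>t. u v \<noteq> 0"
      unfolding module.dependent_explicit[OF M] by blast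
    define u' where "u' v = (if v \<in> t then u v else 0)" for v
    have "(\<Sum>v\<in>S. mscale (u' v) v) = (\<Sum>v\<in>t. mscale (u v) v)"
      using t finS by (intro sum.mono_neutral_cong_right) (auto simp: u'_def mscale_def fun_eq_iff)
    then have Z: "(\<Sum>p\<in>P. mscale (u' (f p)) (f p)) + mscale (u' C) C = 0"
      using t sumS by simp
    define a where "a p = u' (f p)" for p
    have Zent: "(\<Sum>p\<in>P. mscale (a p) (f p)) r s + u' C * C r s = 0" for r s
      using fun_cong[OF fun_cong[OF Z, of r], of s] by (simp add: a_def mscale_def)
    have A0: "\<forall>r\<in>{1..m}. a (r, s) = 0" if "1 \<le> s" "s \<le> n - 1" for s
      using that
    proof (induction s)
      case 0 then show ?case by simp
    next
      case (Suc k)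
      show ?case
      proof
        fix r assume r: "r \<in> {1..m}"
        have "C r (Suc k) = 0" using Suc.prems by (auto simp: C_def Cmat_def)
        then have e: "(\<Sum>p\<in>P. mscale (a p) (f p)) r (Suc k) = 0" using Zent[of r "Suc k"] by simp
        have "(if 2 \<le> Suc k then (\<Sum>i\<in>{1..m}-{r}. a (i, Suc k - 1)) else 0) = 0"
          using Suc.IH Suc.prems by auto
        then show "a (r, Suc k) = 0" using e ent[OF r, of "Suc k" a] Suc.prems by simp
      qed
    qed
    have c0: "u' C = 0"
    proof -
      have r: "1 \<in> {1..m}" using assms by simp
      have "C 1 n = 1" using assms by (simp add: C_def Cmat_def)
      moreover have "(if 2 \<le> n then (\<Sum>i\<in>{1..m}-{1}. a (i, n - 1)) else 0) = 0"
        using A0 by auto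
      moreover have "\<not> n \<le> n - Suc 0" using assms by simp
      ultimately show ?thesis using Zent[of 1 n] ent[OF r, of n a] assms by simp
    qed
    have "u' v = 0" if vS: "v \<in> S" for v
    proof (cases "v = C")
      case True then show ?thesis using c0 by simp
    next
      case False
      then obtain p where p: "p \<in> P" "v = f p" using vS S' by auto
      then obtain i j where "p = (i, j)" "i \<in> {1..m}" "j \<in> {1..n-1}" unfolding P_def by auto
      then show ?thesis using A0[of j] p a_def by auto
    qed
    then show False using t unfolding u'_def by (metis subsetD)
  qed
  have span: "Gamma m n \<subseteq> module.span mscale S"
  proof
    fix A assume A: "A \<in> Gamma m n"
    define a where "a p = coef A m (fst p) (snd p)" for p
    define c where "c = 1 - (\<Sum>p\<in>P. a p)"
    define Mx where "Mx = (\<Sum>p\<in>P. mscale (a p) (f p)) + mscale c C"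
    have low: "Mx r s = A r s" if r: "r \<in> {1..m}" and s: "s \<in> {1..n-1}" for r s
    proof -
      obtain k where k: "s = Suc k" using s by (cases s) auto
      have s': "s \<in> {1..n}" "s \<le> n - 1" "s \<noteq> n" using s assms by auto
      have Cz: "C r s = 0" using s'(3) by (simp add: C_def Cmat_def)
      have e: "Mx r s = a (r, s) + (if 2 \<le> s then (\<Sum>i\<in>{1..m}-{r}. a (i, s - 1)) else 0)"
        using ent[OF r s'(1), of a] s'(2) Cz by (simp add: Mx_def mscale_def)
      have "(if 2 \<le> s then (\<Sum>i\<in>{1..m}-{r}. a (i, s - 1)) else 0) = (\<Sum>i\<in>{1..m}-{r}. coef A m i k)"
        using k by (cases k) (auto simp: a_def)
      then have "Mx r s = a (r, s) + (\<Sum>i\<in>{1..m}-{r}. coef A m i k)" using e by simp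
      then show ?thesis by (simp add: k a_def)
    qed
    have rowB: "(\<Sum>s=1..n. f p r s) = 1" if "p \<in> P" "r \<in> {1..m}" for p r
      using B_Gamma[of "fst p" m "snd p" n] that unfolding Gamma_def P_def f_def by auto
    have rowM: "(\<Sum>s=1..n. Mx r s) = 1" if r: "r \<in> {1..m}" for r
    proof -
      have "(\<Sum>s=1..n. Mx r s) = (\<Sum>s=1..n. (\<Sum>p\<in>P. a p * f p r s) + c * C r s)"
        by (simp add: Mx_def sum_app mscale_def)
      also have "\<dots> = (\<Sum>p\<in>P. a p * (\<Sum>s=1..n. f p r s)) + c * (\<Sum>s=1..n. C r s)"
        by (simp add: sum.distrib sum_distrib_left) (rule sum.swap)
      also have "\<dots> = (\<Sum>p\<in>P. a p) + c"
        using rowB r C_Gamma[OF assms(2), of m] unfolding C_def Gamma_def by simp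
      finally show ?thesis by (simp add: c_def)
    qed
    have "Mx = A"
    proof (intro ext)
      fix r s
      show "Mx r s = A r s"
      proof (cases "r \<in> {1..m} \<and> s \<in> {1..n}")
        case False
        then have "Mx r s = 0" using zeroB[of r s a] assms by (auto simp: Mx_def mscale_def C_def Cmat_def)
        moreover have "A r s = 0" using A False by (auto simp: Gamma_def is_mat_def)
        ultimately show ?thesis by simp
      next
        case True
        show ?thesis
        proof (cases "s = n")
          case False then show ?thesis using True low by auto
        next
          case sn: True
          have n1: "{1..n} = insert n {1..n-1}" using assms by auto
          have "(\<Sum>s=1..n. Mx r s) = (\<Sum>s=1..n. A r s)" using rowM True A by (simp add: Gamma_def)
          moreover have "(\<Sum>s=1..n-1. Mx r s) = (\<Sum>s=1..n-1. A r s)"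
            using low True by (intro sum.cong) auto
          moreover have "sum g {1..n} = g n + sum g {1..n-1}" for g :: "nat \<Rightarrow> real"
            unfolding n1 by (subst sum.insert) auto
          ultimately show ?thesis using sn by simp
        qed
      qed
    qed
    define u where "u v = (if v = C then c else a (the_inv_into P f v))" for v
    have "(\<Sum>v\<in>S. mscale (u v) v) = Mx"
      unfolding sumS Mx_def using Cnot inj
      by (auto simp: u_def the_inv_into_f_f intro!: sum.cong)
    then show "A \<in> module.span mscale S"
      unfolding module.span_explicit[OF M] using finS \<open>Mx = A\<close> by blast
  qed
  show ?thesis using sub card indep span by blast
qed

end
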